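(* Let $X$ be an algebraic K3 surface of Picard number $9$ with an even set of eight disjoint smooth rational curves $N_1,\dots,N_8$, let $N\subseteq NS(X)$ be the minimal primitive sublattice containing them, let $L$ generate $N^\perp\subseteq NS(X)$ with $L^2=2d>0$, $L^2\equiv 0\pmod 4$, and suppose $NS(X)\neq \mathbb{Z}L\oplus N$, so that $NS(X)$ is generated by $\mathbb{Z}L\oplus N$ and a class $\frac{L+v}{2}$ with $v\in N$. Then: (i) if $L^2\equiv 4\pmod 8$, after renumbering the $N_i$ one can take $v=-N_1-N_2$, and then $\frac{L-N_3-\dots-N_8}{2}\in NS(X)$ as well; (ii) if $L^2\equiv 0\pmod 8$, after renumbering the $N_i$ one can take $v=-(N_1+N_2+N_3+N_4)$, and then $\frac{L-N_5-N_6-N_7-N_8}{2}\in NS(X)$ as well.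
   Context: All varieties are over $\mathbb{C}$. A set of disjoint smooth rational curves $N_1,\dots,N_m$ on a smooth surface $X$ is an even set if there is $\delta\in\mathrm{Pic}(X)$ with $N_1+\dots+N_m\sim 2\delta$. The minimal primitive sublattice of $NS(X)$ containing an even set of eight disjoint smooth rational curves on a K3 surface is the Nikulin lattice $N$, generated by $N_1,\dots,N_8$ and $\hat N=\frac12\sum N_i$, with $N_i\cdot N_j=-2\delta_{ij}$. *)

theory Defs
  imports "HOL-Analysis.Analysis"
begin

text \<open>NS(X) is modelled as a subgroup
of a real vector space (playing the role of NS(X) tensor R inside H^2(X,R)),
equipped with the (real-valued) intersection form.\<close>

definition sym_bilinear :: "('v::real_vector \<Rightarrow> 'v \<Rightarrow> real) \<Rightarrow> bool" where
  "sym_bilinear B \<longleftrightarrow> bilinear B \<and> (\<forall>x y. B x y = B y x)"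

definition subgroup_of :: "'v::real_vector set \<Rightarrow> bool" where
  "subgroup_of M \<longleftrightarrow> 0 \<in> M \<and> (\<forall>x\<in>M. \<forall>y\<in>M. x + y \<in> M) \<and> (\<forall>x\<in>M. - x \<in> M)"

definition free_of_rank :: "'v::real_vector set \<Rightarrow> nat \<Rightarrow> bool" where
  "free_of_rank M r \<longleftrightarrow> (\<exists>e :: nat \<Rightarrow> 'v.
      (\<forall>c. (\<Sum>i<r. c i *\<^sub>R e i) = 0 \<longrightarrow> (\<forall>i<r. c i = 0)) \<and>
      M = {(\<Sum>i<r. real_of_int (k i) *\<^sub>R e i) | k. True})"

definition even_lattice :: "('v::real_vector \<Rightarrow> 'v \<Rightarrow> real) \<Rightarrow> 'v set \<Rightarrow> bool" where
  "even_lattice B M \<longleftrightarrow> subgroup_of M \<and>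
      (\<forall>x\<in>M. \<forall>y\<in>M. B x y \<in> \<int>) \<and>
      (\<forall>x\<in>M. B x x / 2 \<in> \<int>) \<and>
      (\<forall>x\<in>M. (\<forall>y\<in>M. B x y = 0) \<longrightarrow> x = 0)"

definition zspan :: "'v::real_vector set \<Rightarrow> 'v set" where
  "zspan S = {(\<Sum>s\<in>F. real_of_int (k s) *\<^sub>R s) | F k. finite F \<and> F \<subseteq> S}"

definition prim_closure :: "'v::real_vector set \<Rightarrow> 'v set \<Rightarrow> 'v set" where
  "prim_closure M S = {x \<in> M. \<exists>k::int. k \<noteq> 0 \<and> of_int k *\<^sub>R x \<in> zspan S}"

definition orth_in :: "('v::real_vector \<Rightarrow> 'v \<Rightarrow> real) \<Rightarrow> 'v set \<Rightarrow> 'v set \<Rightarrow> 'v set" where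
  "orth_in B M A = {x \<in> M. \<forall>y\<in>A. B x y = 0}"

end

theory Submission
  imports Defs
begin

lemma bil_lsum: "bilinear h \<Longrightarrow> h (sum f S) z = (\<Sum>i\<in>S. h (f i) z)"
proof -
  assume a: "bilinear h"
  interpret l: linear "\<lambda>x. h x z" using a by (simp add: bilinear_def)
  show ?thesis by (simp add: l.sum)
qed

lemma bil_rsum: "bilinear h \<Longrightarrow> h z (sum f S) = (\<Sum>i\<in>S. h z (f i))"
proof -
  assume a: "bilinear h"
  interpret l: linear "\<lambda>x. h z x" using a by (simp add: bilinear_def)
  show ?thesis by (simp add: l.sum)
qed

lemma sg_nat: "subgroup_of M \<Longrightarrow> v \<in> M \<Longrightarrow> of_nat n *\<^sub>R v \<in> M"
  by (induction n) (auto simp: subgroup_of_def scaleR_left_distrib)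

lemma sg_int: "subgroup_of M \<Longrightarrow> v \<in> M \<Longrightarrow> of_int k *\<^sub>R v \<in> M"
proof (cases "k \<ge> 0")
  case True
  assume "subgroup_of M" "v \<in> M"
  then show ?thesis using sg_nat[of M v "nat k"] True by simp
next
  case False
  assume a: "subgroup_of M" "v \<in> M"
  have "of_nat (nat (-k)) *\<^sub>R v \<in> M" using sg_nat a by blast
  then have "- (of_nat (nat (-k)) *\<^sub>R v) \<in> M" using a(1) by (simp add: subgroup_of_def)
  then show ?thesis using False by simp
qed

lemma sg_add: "subgroup_of M \<Longrightarrow> x \<in> M \<Longrightarrow> y \<in> M \<Longrightarrow> x + y \<in> M"
  by (simp add: subgroup_of_def)

lemma sg_diff: "subgroup_of M \<Longrightarrow> x \<in> M \<Longrightarrow> y \<in> M \<Longrightarrow> x - y \<in> M"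
  by (metis diff_conv_add_uminus subgroup_of_def)

lemma sg_sum: assumes "subgroup_of M" "finite A" "\<forall>i\<in>A. v i \<in> M" shows
   "(\<Sum>i\<in>A. of_int (a i) *\<^sub>R v i) \<in> M"
  using assms(2,3)
proof (induction A rule: finite_induct)
  case empty then show ?case using assms(1) by (simp add: subgroup_of_def)
next
  case (insert x F) then show ?case using assms(1) by (simp add: sg_add sg_int)
qed

lemma zspan_sum: "inj_on C A \<Longrightarrow> finite A \<Longrightarrow>
   (\<Sum>i\<in>A. of_int (a i) *\<^sub>R C i) \<in> zspan (C ` A)"
proof -
  assume inj: "inj_on C A" and fin: "finite A"
  have "(\<Sum>s\<in>C ` A. of_int ((a \<circ> the_inv_into A C) s) *\<^sub>R s) = (\<Sum>i\<in>A. of_int (a i) *\<^sub>R C i)"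
    using inj by (simp add: sum.reindex the_inv_into_f_f)
  then show ?thesis unfolding zspan_def using fin
    by (intro CollectI exI[of _ "C ` A"] exI[of _ "a \<circ> the_inv_into A C"]) auto
qed

lemma int_div4: "real_of_int a / 4 \<in> \<int> \<Longrightarrow> (4::int) dvd a"
proof -
  assume "real_of_int a / 4 \<in> \<int>"
  then obtain n where "real_of_int a / 4 = of_int n" by (auto elim: Ints_cases)
  then have "real_of_int a = of_int (4*n)" by simp
  then have "a = 4*n" by linarith
  then show ?thesis by simp
qed

lemma sq_mod4: "((c::int)^2) mod 4 = (if odd c then 1 else 0)"
proof (cases "even c")
  case True then obtain k where "c = 2*k" by blast
  then show ?thesis by (simp add: power2_eq_square)
next
  case False then obtain k where "c = 2*k+1" using oddE by blast
  then have "c^2 = 4*(k*k+k) + 1" by (simp add: power2_eq_square algebra_simps)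
  then show ?thesis using False by presburger
qed

lemma sumsq_mod4: "finite A \<Longrightarrow> (\<Sum>i\<in>A. (c i::int)^2) mod 4 = int (card {i\<in>A. odd (c i)}) mod 4"
proof -
  assume fin: "finite A"
  have "(\<Sum>i\<in>A. (c i::int)^2) mod 4 = (\<Sum>i\<in>A. (c i)^2 mod 4) mod 4" by (simp add: mod_sum_eq)
  also have "\<dots> = (\<Sum>i\<in>A. if odd (c i) then 1 else 0) mod 4" by (simp add: sq_mod4)
  also have "(\<Sum>i\<in>A. if odd (c i) then 1 else (0::int)) = int (card {i\<in>A. odd (c i)})"
    using fin by (simp add: sum.If_cases Collect_conj_eq Int_commute)
  finally show ?thesis .
qed

lemma perm_exists:
  assumes T: "T \<subseteq> {1..8::nat}" and t: "card T = t"
  shows "\<exists>\<sigma>. bij_betw \<sigma> {1..8::nat} {1..8} \<and> \<sigma> ` {1..t} = T \<and> \<sigma> ` {t+1..8} = {1..8} - T"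
proof -
  have tle: "t \<le> 8" using T t by (metis card_atLeastAtMost card_mono diff_Suc_1 finite_atLeastAtMost)
  obtain f where f: "bij_betw f {1..t} T"
    using finite_same_card_bij[of "{1..t}" T] T t by (metis card_atLeastAtMost diff_Suc_1 finite_atLeastAtMost finite_subset)
  have c2: "card ({1..8::nat} - T) = card {t+1..8}" using T t tle
    by (simp add: card_Diff_subset finite_subset)
  obtain g where g: "bij_betw g {t+1..8} ({1..8} - T)"
    using finite_same_card_bij[of "{t+1..8}" "{1..8::nat} - T"] c2 by (metis finite_Diff finite_atLeastAtMost)
  define \<sigma> where "\<sigma> i = (if i \<le> t then f i else g i)" for i
  have b1: "bij_betw \<sigma> {1..t} T" using f by (rule bij_betw_cong[THEN iffD1, rotated]) (simp add: \<sigma>_def)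
  have b2: "bij_betw \<sigma> {t+1..8} ({1..8} - T)" using g by (rule bij_betw_cong[THEN iffD1, rotated]) (simp add: \<sigma>_def)
  have "bij_betw \<sigma> ({1..t} \<union> {t+1..8}) (T \<union> ({1..8} - T))"
    by (rule bij_betw_combine[OF b1 b2]) auto
  moreover have "{1..t} \<union> {t+1..8} = {1..8::nat}" using tle by auto
  moreover have "T \<union> ({1..8} - T) = {1..8}" using T by auto
  ultimately show ?thesis using b1 b2 by (auto simp: bij_betw_def)
qed

lemma par1: "(x::int) - (if odd x then 1 else 0) = 2 * ((x - (if odd x then 1 else 0)) div 2) + 0"
  by (cases "odd x") (auto elim!: oddE)
lemma par2: "(x::int) - (if even x then 1 else 0) = 2 * ((x - (if even x then 1 else 0) - 1) div 2) + 1"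
  by (cases "odd x") (auto elim!: oddE evenE)

theorem corollary3p4:
  fixes B :: "'v::real_vector \<Rightarrow> 'v \<Rightarrow> real"
    and NS :: "'v set" and L :: 'v and C :: "nat \<Rightarrow> 'v" and d :: int
  assumes symB: "sym_bilinear B"
    and evenNS: "even_lattice B NS"
    and rank9: "free_of_rank NS 9"
    and curves: "\<forall>i\<in>{1..8}. C i \<in> NS"
    and disj: "\<forall>i\<in>{1..8}. \<forall>j\<in>{1..8}. B (C i) (C j) = (if i = j then -2 else 0)"
    and evenset: "\<exists>\<delta>\<in>NS. (\<Sum>i=1..8. C i) = 2 *\<^sub>R \<delta>"
    and Lgen: "orth_in B NS (prim_closure NS (C ` {1..8})) = {of_int k *\<^sub>R L | k. True}"
    and L2: "B L L = 2 * of_int d" and dpos: "d > 0" and d4: "(4::int) dvd 2 * d"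
    and notsum: "NS \<noteq> {of_int k *\<^sub>R L + n | k n. n \<in> prim_closure NS (C ` {1..8})}"
  shows "((2 * d) mod 8 = 4 \<longrightarrow>
           (\<exists>\<sigma>. bij_betw \<sigma> {1..8::nat} {1..8} \<and>
              NS = {of_int k *\<^sub>R L + n + of_int m *\<^sub>R ((1/2) *\<^sub>R (L - C (\<sigma> 1) - C (\<sigma> 2)))
                    | k m n. n \<in> prim_closure NS (C ` {1..8})} \<and>
              (1/2) *\<^sub>R (L - (\<Sum>i=3..8. C (\<sigma> i))) \<in> NS))
       \<and> ((2 * d) mod 8 = 0 \<longrightarrow>
           (\<exists>\<sigma>. bij_betw \<sigma> {1..8::nat} {1..8} \<and>
              NS = {of_int k *\<^sub>R L + n
                      + of_int m *\<^sub>R ((1/2) *\<^sub>R (L - (C (\<sigma> 1) + C (\<sigma> 2) + C (\<sigma> 3) + C (\<sigma> 4))))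
                    | k m n. n \<in> prim_closure NS (C ` {1..8})} \<and>
              (1/2) *\<^sub>R (L - C (\<sigma> 5) - C (\<sigma> 6) - C (\<sigma> 7) - C (\<sigma> 8)) \<in> NS))"
proof -
  have bil: "bilinear B" using symB by (simp add: sym_bilinear_def)
  have sym: "\<And>x y. B x y = B y x" using symB by (simp add: sym_bilinear_def)
  have sg: "subgroup_of NS" using evenNS by (simp add: even_lattice_def)
  have intB: "\<And>x y. x \<in> NS \<Longrightarrow> y \<in> NS \<Longrightarrow> B x y \<in> \<int>" using evenNS by (simp add: even_lattice_def)
  have evB: "\<And>x. x \<in> NS \<Longrightarrow> B x x / 2 \<in> \<int>" using evenNS by (simp add: even_lattice_def)
  have CNS: "\<And>i. i \<in> {1..8} \<Longrightarrow> C i \<in> NS" using curves by blast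
  have Cdiag: "\<And>i j. i \<in> {1..8} \<Longrightarrow> j \<in> {1..8} \<Longrightarrow> B (C i) (C j) = (if i = j then -2 else 0)"
    using disj by blast
  have inj: "inj_on C {1..8}"
  proof (rule inj_onI)
    fix i j assume ij: "i \<in> {1..8::nat}" "j \<in> {1..8::nat}" "C i = C j"
    then show "i = j" using Cdiag[of i i] Cdiag[of i j] by (auto split: if_splits)
  qed
  define N where "N = prim_closure NS (C ` {1..8})"
  have NNS: "N \<subseteq> NS" by (auto simp: N_def prim_closure_def)
  have Nmem: "\<And>u a. u \<in> NS \<Longrightarrow> 2 *\<^sub>R u = (\<Sum>i\<in>{1..8}. of_int (a i) *\<^sub>R C i) \<Longrightarrow> u \<in> N"
  proof -
    fix u a assume "u \<in> NS" "2 *\<^sub>R u = (\<Sum>i\<in>{1..8::nat}. of_int (a i) *\<^sub>R C i)"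
    then show "u \<in> N" unfolding N_def prim_closure_def
      using zspan_sum[OF inj, of a] by (intro CollectI conjI exI[of _ 2]) auto
  qed
  have orthN: "\<And>p u. (\<forall>i\<in>{1..8}. B p (C i) = 0) \<Longrightarrow> u \<in> N \<Longrightarrow> B p u = 0"
  proof -
    fix p u assume h: "\<forall>i\<in>{1..8::nat}. B p (C i) = 0" and u: "u \<in> N"
    then obtain k::int where k: "k \<noteq> 0" "of_int k *\<^sub>R u \<in> zspan (C ` {1..8})"
      by (auto simp: N_def prim_closure_def)
    then obtain F c where F: "finite F" "F \<subseteq> C ` {1..8}"
      "of_int k *\<^sub>R u = (\<Sum>s\<in>F. real_of_int (c s) *\<^sub>R s)" unfolding zspan_def by blast
    have "B p (of_int k *\<^sub>R u) = (\<Sum>s\<in>F. B p (real_of_int (c s) *\<^sub>R s))"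
      using F(3) bil_rsum[OF bil] by simp
    also have "\<dots> = 0" using F(2) h by (intro sum.neutral) (auto simp: bilinear_rmul[OF bil])
    finally have "of_int k * B p u = 0" by (simp add: bilinear_rmul[OF bil])
    then show "B p u = 0" using k(1) by simp
  qed
  have "L \<in> {of_int k *\<^sub>R L | k. True}" by (rule CollectI, rule exI[of _ 1]) simp
  then have Lorth: "L \<in> orth_in B NS N" using Lgen unfolding N_def by simp
  then have LNS: "L \<in> NS" and LN: "\<And>u. u \<in> N \<Longrightarrow> B L u = 0" by (auto simp: orth_in_def)
  have CN: "\<And>i. i \<in> {1..8} \<Longrightarrow> C i \<in> N"
  proof -
    fix i :: nat assume i: "i \<in> {1..8}"
    have "of_int 1 *\<^sub>R C i \<in> zspan (C ` {1..8})" unfolding zspan_def using i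
      by (intro CollectI exI[of _ "{C i}"] exI[of _ "\<lambda>_. 1"]) auto
    then show "C i \<in> N" unfolding N_def prim_closure_def using CNS[OF i]
      by (intro CollectI conjI exI[of _ 1]) auto
  qed
  have LC: "\<And>i. i \<in> {1..8} \<Longrightarrow> B L (C i) = 0" using LN CN by blast
  have fl: "\<And>z i. z \<in> NS \<Longrightarrow> i \<in> {1..8} \<Longrightarrow> of_int \<lfloor>B z (C i)\<rfloor> = B z (C i)"
    using intB CNS by (metis Ints_cases floor_of_int)
  have decomp: "\<And>z. z \<in> NS \<Longrightarrow> \<exists>k::int. 2 *\<^sub>R z = of_int k *\<^sub>R L - (\<Sum>i\<in>{1..8}. B z (C i) *\<^sub>R C i)"
  proof -
    fix z assume z: "z \<in> NS"
    define a where "a i = \<lfloor>B z (C i)\<rfloor>" for i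
    define p where "p = 2 *\<^sub>R z + (\<Sum>i\<in>{1..8}. B z (C i) *\<^sub>R C i)"
    have sumeq: "(\<Sum>i\<in>{1..8}. B z (C i) *\<^sub>R C i) = (\<Sum>i\<in>{1..8::nat}. of_int (a i) *\<^sub>R C i)"
      by (rule sum.cong[OF refl]) (simp add: a_def fl[OF z])
    have z2: "2 *\<^sub>R z \<in> NS" using sg_add[OF sg z z] by (simp add: scaleR_2)
    have pNS: "p \<in> NS" unfolding p_def sumeq
      using sg_add[OF sg z2 sg_sum[OF sg, of "{1..8}" C a]] CNS by auto
    have pC: "B p (C j) = 0" if j: "j \<in> {1..8}" for j
    proof -
      have "B p (C j) = 2 * B z (C j) + (\<Sum>i\<in>{1..8}. B z (C i) * B (C i) (C j))"
        by (simp add: p_def bilinear_ladd[OF bil] bil_lsum[OF bil] bilinear_lmul[OF bil])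
      also have "(\<Sum>i\<in>{1..8}. B z (C i) * B (C i) (C j)) = (\<Sum>i\<in>{1..8}. if i = j then B z (C i) * (-2) else 0)"
        using Cdiag j by (intro sum.cong) auto
      also have "\<dots> = B z (C j) * (-2)" using j by (simp add: sum.delta)
      finally show ?thesis by simp
    qed
    have "p \<in> orth_in B NS N" using pNS pC orthN by (auto simp: orth_in_def)
    then obtain k where k: "p = of_int k *\<^sub>R L" using Lgen N_def by auto
    have "2 *\<^sub>R z = p - (\<Sum>i\<in>{1..8}. B z (C i) *\<^sub>R C i)" by (simp add: p_def)
    then show "\<exists>k::int. 2 *\<^sub>R z = of_int k *\<^sub>R L - (\<Sum>i\<in>{1..8}. B z (C i) *\<^sub>R C i)"
      using k by blast
  qed
  have sub: "{of_int k *\<^sub>R L + n | k n. n \<in> N} \<subseteq> NS"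
    using sg_add[OF sg] sg_int[OF sg LNS] NNS by blast
  obtain x0 where x0: "x0 \<in> NS" "x0 \<notin> {of_int k *\<^sub>R L + n | k n. n \<in> N}"
    using notsum sub unfolding N_def by blast
  obtain k0 where k0: "2 *\<^sub>R x0 = of_int k0 *\<^sub>R L - (\<Sum>i\<in>{1..8}. B x0 (C i) *\<^sub>R C i)"
    using decomp x0(1) by blast
  define c where "c i = \<lfloor>B x0 (C i)\<rfloor>" for i
  define S where "S = (\<Sum>i\<in>{1..8::nat}. of_int (c i) *\<^sub>R C i)"
  have S0: "(\<Sum>i\<in>{1..8}. B x0 (C i) *\<^sub>R C i) = S"
    unfolding S_def by (rule sum.cong[OF refl]) (simp add: c_def fl[OF x0(1)])
  have k0odd: "odd k0"
  proof
    assume "even k0" then obtain j where j: "k0 = 2*j" by blast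
    define u where "u = x0 - of_int j *\<^sub>R L"
    have uNS: "u \<in> NS" unfolding u_def using sg_diff[OF sg x0(1) sg_int[OF sg LNS]] .
    have "2 *\<^sub>R u = 2 *\<^sub>R x0 - of_int (2*j) *\<^sub>R L" by (simp add: u_def algebra_simps)
    also have "\<dots> = - S" using k0 S0 j by simp
    also have "\<dots> = (\<Sum>i\<in>{1..8}. of_int (- c i) *\<^sub>R C i)" by (simp add: S_def sum_negf)
    finally have "u \<in> N" by (rule Nmem[OF uNS])
    moreover have "x0 = of_int j *\<^sub>R L + u" by (simp add: u_def)
    ultimately show False using x0(2) by blast
  qed
  then obtain j where j: "k0 = 2*j+1" using oddE by blast
  define y where "y = x0 - of_int j *\<^sub>R L"
  have yNS: "y \<in> NS" unfolding y_def using sg_diff[OF sg x0(1) sg_int[OF sg LNS]] .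
  have y2: "2 *\<^sub>R y = L - S"
  proof -
    have "2 *\<^sub>R y = 2 *\<^sub>R x0 - of_int (2*j) *\<^sub>R L" by (simp add: y_def algebra_simps)
    also have "\<dots> = of_int (2*j+1) *\<^sub>R L - S - of_int (2*j) *\<^sub>R L" using k0 S0 j by simp
    also have "\<dots> = L - S" by (simp add: algebra_simps)
    finally show ?thesis .
  qed
  have SC: "B S (C k) = -2 * of_int (c k)" if k: "k \<in> {1..8}" for k
  proof -
    have "B S (C k) = (\<Sum>i\<in>{1..8}. of_int (c i) * B (C i) (C k))"
      by (simp add: S_def bil_lsum[OF bil] bilinear_lmul[OF bil])
    also have "\<dots> = (\<Sum>i\<in>{1..8}. if i = k then of_int (c i) * (-2) else 0)"
      using Cdiag k by (intro sum.cong) auto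
    also have "\<dots> = -2 * of_int (c k)" using k by (simp add: sum.delta)
    finally show ?thesis .
  qed
  have LS: "B L S = 0" using LC by (simp add: S_def bil_rsum[OF bil] bilinear_rmul[OF bil])
  have SL: "B S L = 0" using LS sym by metis
  define Q where "Q = (\<Sum>i\<in>{1..8::nat}. (c i)^2)"
  have SS: "B S S = -2 * of_int Q"
  proof -
    have "B S S = (\<Sum>i\<in>{1..8}. of_int (c i) * B (C i) S)"
      by (simp add: S_def[of] bil_lsum[OF bil] bilinear_lmul[OF bil])
    also have "\<dots> = (\<Sum>i\<in>{1..8}. -2 * of_int ((c i)^2))"
      using SC sym by (intro sum.cong) (auto simp: power2_eq_square)
    also have "\<dots> = -2 * of_int Q" by (simp add: Q_def sum_distrib_left)
    finally show ?thesis .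
  qed
  have "4 * B y y = B (2 *\<^sub>R y) (2 *\<^sub>R y)" by (simp add: bilinear_lmul[OF bil] bilinear_rmul[OF bil])
  also have "\<dots> = B L L - B L S - B S L + B S S"
    by (simp add: y2 bilinear_lsub[OF bil] bilinear_rsub[OF bil])
  also have "\<dots> = 2 * of_int d - 2 * of_int Q" using L2 LS SL SS by simp
  finally have "B y y / 2 = of_int (d - Q) / 4" by simp
  then have dQ: "(4::int) dvd (d - Q)" using evB[OF yNS] int_div4 by metis
  define Od where "Od = {i\<in>{1..8::nat}. odd (c i)}"
  have Qm: "Q mod 4 = int (card Od) mod 4" unfolding Q_def Od_def by (rule sumsq_mod4) simp
  have dmod: "d mod 4 = int (card Od) mod 4" using dQ Qm by (metis dvd_imp_mod_0 mod_diff_cong mod_0 diff_self eq_iff_diff_eq_0 mod_eq_dvd_iff)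
  obtain \<delta> where \<delta>: "\<delta> \<in> NS" "(\<Sum>i=1..8. C i) = 2 *\<^sub>R \<delta>" using evenset by blast
  have sumT: "sum C T = (\<Sum>i\<in>{1..8}. of_int (if i\<in>T then 1 else 0) *\<^sub>R C i)"
    if T: "T \<subseteq> {1..8::nat}" for T
  proof -
    have "(\<Sum>i\<in>{1..8}. of_int (if i\<in>T then 1 else 0) *\<^sub>R C i) = (\<Sum>i\<in>{1..8}. if i\<in>T then C i else 0)"
      by (intro sum.cong) auto
    also have "\<dots> = sum C ({1..8} \<inter> T)" by (simp add: sum.inter_restrict)
    also have "{1..8} \<inter> T = T" using T by blast
    finally show ?thesis by simp
  qed
  have xin: "(1/2) *\<^sub>R (L - sum C T) \<in> NS"
    if T: "T \<subseteq> {1..8::nat}" and ef: "\<forall>i\<in>{1..8}. c i - (if i\<in>T then 1 else 0) = 2 * f i + \<epsilon>"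
    for T f \<epsilon>
  proof -
    define w where "w = (\<Sum>i\<in>{1..8::nat}. of_int (f i) *\<^sub>R C i) + of_int \<epsilon> *\<^sub>R \<delta>"
    have wNS: "w \<in> NS" unfolding w_def
      using sg_add[OF sg sg_sum[OF sg, of "{1..8}" C f] sg_int[OF sg \<delta>(1)]] CNS by auto
    have "S - sum C T = (\<Sum>i\<in>{1..8}. of_int (c i - (if i\<in>T then 1 else 0)) *\<^sub>R C i)"
      unfolding S_def sumT[OF T] sum_subtractf[symmetric]
      by (rule sum.cong[OF refl]) (simp add: scaleR_left_diff_distrib)
    also have "\<dots> = (\<Sum>i\<in>{1..8}. of_int (2 * f i + \<epsilon>) *\<^sub>R C i)"
      using ef by (intro sum.cong) auto
    also have "\<dots> = 2 *\<^sub>R (\<Sum>i\<in>{1..8::nat}. of_int (f i) *\<^sub>R C i) + of_int \<epsilon> *\<^sub>R (\<Sum>i=1..8. C i)"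
      by (simp add: scaleR_left_distrib sum.distrib scaleR_sum_right)
    also have "\<dots> = 2 *\<^sub>R w" using \<delta>(2) by (simp add: w_def scaleR_right_distrib)
    finally have e1: "S - sum C T = 2 *\<^sub>R w" .
    have "2 *\<^sub>R ((1/2) *\<^sub>R (L - sum C T)) = 2 *\<^sub>R y + (S - sum C T)" by (simp add: y2)
    also have "\<dots> = 2 *\<^sub>R (y + w)" by (simp add: e1 scaleR_right_distrib)
    finally have "(1/2) *\<^sub>R (L - sum C T) = y + w" by simp
    then show ?thesis using sg_add[OF sg yNS wNS] by simp
  qed
  have seteq: "NS = {of_int k *\<^sub>R L + n + of_int m *\<^sub>R ((1/2) *\<^sub>R (L - sum C T)) | k m n. n \<in> N}"
    if T: "T \<subseteq> {1..8::nat}" and xT: "(1/2) *\<^sub>R (L - sum C T) \<in> NS" for T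
  proof
    show "{of_int k *\<^sub>R L + n + of_int m *\<^sub>R ((1/2) *\<^sub>R (L - sum C T)) | k m n. n \<in> N} \<subseteq> NS"
      using sg_add[OF sg] sg_int[OF sg LNS] sg_int[OF sg xT] NNS by blast
    show "NS \<subseteq> {of_int k *\<^sub>R L + n + of_int m *\<^sub>R ((1/2) *\<^sub>R (L - sum C T)) | k m n. n \<in> N}"
    proof
      fix z assume z: "z \<in> NS"
      obtain kz where kz: "2 *\<^sub>R z = of_int kz *\<^sub>R L - (\<Sum>i\<in>{1..8}. B z (C i) *\<^sub>R C i)"
        using decomp z by blast
      define b where "b i = \<lfloor>B z (C i)\<rfloor>" for i
      have Sz: "(\<Sum>i\<in>{1..8}. B z (C i) *\<^sub>R C i) = (\<Sum>i\<in>{1..8::nat}. of_int (b i) *\<^sub>R C i)"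
        by (rule sum.cong[OF refl]) (simp add: b_def fl[OF z])
      define n where "n = z - of_int kz *\<^sub>R ((1/2) *\<^sub>R (L - sum C T))"
      have nNS: "n \<in> NS" unfolding n_def using sg_diff[OF sg z sg_int[OF sg xT]] .
      have "2 *\<^sub>R n = 2 *\<^sub>R z - of_int kz *\<^sub>R (L - sum C T)"
        by (simp add: n_def scaleR_right_diff_distrib)
      also have "\<dots> = of_int kz *\<^sub>R sum C T - (\<Sum>i\<in>{1..8::nat}. of_int (b i) *\<^sub>R C i)"
        using kz Sz by (simp add: algebra_simps)
      also have "\<dots> = (\<Sum>i\<in>{1..8}. of_int (kz * (if i\<in>T then 1 else 0) - b i) *\<^sub>R C i)"
        unfolding sumT[OF T] scaleR_sum_right sum_subtractf[symmetric]
        by (rule sum.cong[OF refl]) (simp add: scaleR_left_diff_distrib)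
      finally have "n \<in> N" by (rule Nmem[OF nNS])
      moreover have "z = of_int 0 *\<^sub>R L + n + of_int kz *\<^sub>R ((1/2) *\<^sub>R (L - sum C T))"
        by (simp add: n_def)
      ultimately show "z \<in> {of_int k *\<^sub>R L + n + of_int m *\<^sub>R ((1/2) *\<^sub>R (L - sum C T)) | k m n. n \<in> N}"
        by blast
    qed
  qed
  have half: "(1/2) *\<^sub>R L \<notin> NS"
  proof
    assume h: "(1/2) *\<^sub>R L \<in> NS"
    have "(1/2) *\<^sub>R L \<in> orth_in B NS N"
      using h LN by (simp add: orth_in_def bilinear_lmul[OF bil])
    then obtain k where k: "(1/2) *\<^sub>R L = of_int k *\<^sub>R L" using Lgen N_def by auto
    have kne: "real_of_int k \<noteq> 1/2"
    proof
      assume "real_of_int k = 1/2"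
      then have "real_of_int (2*k) = 1" by simp
      then have "2*k = 1" by linarith
      then show False by presburger
    qed
    have "(1/2 - real_of_int k) *\<^sub>R L = 0" using k by (simp add: scaleR_left_diff_distrib)
    then have "L = 0" using kne by simp
    then have "B L L = 0" using bilinear_lzero[OF bil] by simp
    then show False using L2 dpos by simp
  qed
  have Odsub: "Od \<subseteq> {1..8}" by (auto simp: Od_def)
  have cardle: "card Od \<le> 8" using card_mono[OF _ Odsub] by simp
  have cardc: "card ({1..8} - Od) = 8 - card Od" using Odsub by (simp add: card_Diff_subset finite_subset)
  have gA: "(1/2) *\<^sub>R (L - sum C Od) \<in> NS"
  proof (rule xin[OF Odsub, of "\<lambda>i. (c i - (if i\<in>Od then 1 else 0)) div 2" 0], rule ballI)
    fix i :: nat assume "i \<in> {1..8}"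
    then have iff: "i \<in> Od \<longleftrightarrow> odd (c i)" by (simp add: Od_def)
    have "(if i\<in>Od then 1 else 0) = (if odd (c i) then 1 else (0::int))" using iff by simp
    moreover have "c i - (if odd (c i) then 1 else 0) = 2 * ((c i - (if odd (c i) then 1 else 0)) div 2) + 0"
      by (rule par1)
    ultimately show "c i - (if i\<in>Od then 1 else 0) = 2 * ((c i - (if i\<in>Od then 1 else 0)) div 2) + 0"
      by simp
  qed
  have Odc: "{1..8} - ({1..8} - Od) = Od" using Odsub by blast
  have gB: "(1/2) *\<^sub>R (L - sum C ({1..8} - Od)) \<in> NS"
  proof (rule xin[of _ "\<lambda>i. (c i - (if i\<in>{1..8} - Od then 1 else 0) - 1) div 2" 1], blast, rule ballI)
    fix i :: nat assume i: "i \<in> {1..8}"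
    then have iff: "i \<in> {1..8} - Od \<longleftrightarrow> even (c i)" by (simp add: Od_def)
    have "(if i\<in>{1..8} - Od then 1 else 0) = (if even (c i) then 1 else (0::int))" using iff by simp
    moreover have "c i - (if even (c i) then 1 else 0) = 2 * ((c i - (if even (c i) then 1 else 0) - 1) div 2) + 1"
      by (rule par2)
    ultimately show "c i - (if i\<in>{1..8} - Od then 1 else 0) = 2 * ((c i - (if i\<in>{1..8} - Od then 1 else 0) - 1) div 2) + 1"
      by simp
  qed
  have reidx: "sum C (\<sigma> ` A) = (\<Sum>i\<in>A. C (\<sigma> i))"
    if "bij_betw \<sigma> {1..8::nat} {1..8}" "A \<subseteq> {1..8}" for \<sigma> A
  proof -
    have "inj_on \<sigma> A" using that bij_betw_imp_inj_on inj_on_subset by blast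
    then show ?thesis by (simp add: sum.reindex)
  qed
  show ?thesis
  proof (intro conjI impI)
    assume m: "(2 * d) mod 8 = 4"
    then have "int (card Od) mod 4 = 2" using dmod by presburger
    then have "card Od = 2 \<or> card Od = 6" using cardle by presburger
    then obtain T where T: "T \<subseteq> {1..8}" "card T = 2" "(1/2) *\<^sub>R (L - sum C T) \<in> NS"
      "(1/2) *\<^sub>R (L - sum C ({1..8} - T)) \<in> NS"
    proof (cases "card Od = 2")
      case True then show ?thesis using that gA gB Odsub by blast
    next
      case False
      then have "card ({1..8} - Od) = 2" using cardc \<open>card Od = 2 \<or> card Od = 6\<close> by simp
      then show ?thesis using that[of "{1..8} - Od"] gA gB Odc by auto
    qed
    obtain \<sigma> where s: "bij_betw \<sigma> {1..8::nat} {1..8}" "\<sigma> ` {1..2} = T" "\<sigma> ` {2+1..8} = {1..8} - T"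
      using perm_exists[OF T(1,2)] by blast
    have e12: "{1..2::nat} = {1,2}" by auto
    have s12: "\<sigma> 1 \<noteq> \<sigma> 2" using inj_onD[OF bij_betw_imp_inj_on[OF s(1)], of 1 2] by auto
    have sT: "sum C T = C (\<sigma> 1) + C (\<sigma> 2)"
    proof -
      have "sum C T = (\<Sum>i\<in>{1..2}. C (\<sigma> i))" using reidx[OF s(1), of "{1..2}"] s(2) by simp
      also have "\<dots> = C (\<sigma> 1) + C (\<sigma> 2)" unfolding e12 by simp
      finally show ?thesis .
    qed
    have sTc: "sum C ({1..8} - T) = (\<Sum>i=3..8. C (\<sigma> i))"
      using reidx[OF s(1), of "{3..8}"] s(3) by simp
    have v1: "(1/2) *\<^sub>R (L - C (\<sigma> 1) - C (\<sigma> 2)) = (1/2) *\<^sub>R (L - sum C T)"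
      by (simp add: sT diff_diff_eq)
    show "\<exists>\<sigma>. bij_betw \<sigma> {1..8::nat} {1..8} \<and>
              NS = {of_int k *\<^sub>R L + n + of_int m *\<^sub>R ((1/2) *\<^sub>R (L - C (\<sigma> 1) - C (\<sigma> 2)))
                    | k m n. n \<in> prim_closure NS (C ` {1..8})} \<and>
              (1/2) *\<^sub>R (L - (\<Sum>i=3..8. C (\<sigma> i))) \<in> NS"
    proof (intro exI[of _ \<sigma>] conjI)
      show "bij_betw \<sigma> {1..8::nat} {1..8}" by (rule s(1))
      show "NS = {of_int k *\<^sub>R L + n + of_int m *\<^sub>R ((1/2) *\<^sub>R (L - C (\<sigma> 1) - C (\<sigma> 2)))
                    | k m n. n \<in> prim_closure NS (C ` {1..8})}"
        by (subst v1) (rule seteq[OF T(1,3), unfolded N_def])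
      show "(1/2) *\<^sub>R (L - (\<Sum>i=3..8. C (\<sigma> i))) \<in> NS" using T(4) sTc by simp
    qed
  next
    assume m: "(2 * d) mod 8 = 0"
    then have "int (card Od) mod 4 = 0" using dmod by presburger
    then have "card Od = 0 \<or> card Od = 4 \<or> card Od = 8" using cardle by presburger
    moreover have "card Od \<noteq> 0"
    proof
      assume "card Od = 0" then have "Od = {}" using Odsub by (simp add: finite_subset)
      then show False using gA half by simp
    qed
    moreover have "card Od \<noteq> 8"
    proof
      assume "card Od = 8" then have "{1..8} - Od = {}" using cardc by (simp add: finite_subset)
      then have "(1/2) *\<^sub>R (L - sum C ({1..8} - Od)) = (1/2) *\<^sub>R L" by (simp only: sum.empty diff_zero)
      then show False using gB half by simp
    qed
    ultimately have c4: "card Od = 4" by blast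
    obtain \<sigma> where s: "bij_betw \<sigma> {1..8::nat} {1..8}" "\<sigma> ` {1..4} = Od" "\<sigma> ` {4+1..8} = {1..8} - Od"
      using perm_exists[OF Odsub c4] by blast
    have e14: "{1..4::nat} = {1,2,3,4}" by auto
    have e58: "{5..8::nat} = {5,6,7,8}" by auto
    have inj\<sigma>: "inj_on \<sigma> {1..8}" using s(1) by (simp add: bij_betw_def)
    have sT: "sum C Od = C (\<sigma> 1) + C (\<sigma> 2) + C (\<sigma> 3) + C (\<sigma> 4)"
    proof -
      have "sum C Od = (\<Sum>i\<in>{1..4}. C (\<sigma> i))" using reidx[OF s(1), of "{1..4}"] s(2) by simp
      also have "\<dots> = C (\<sigma> 1) + C (\<sigma> 2) + C (\<sigma> 3) + C (\<sigma> 4)" unfolding e14 by (simp add: algebra_simps)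
      finally show ?thesis .
    qed
    have sTc: "sum C ({1..8} - Od) = C (\<sigma> 5) + C (\<sigma> 6) + C (\<sigma> 7) + C (\<sigma> 8)"
    proof -
      have "sum C ({1..8} - Od) = (\<Sum>i\<in>{5..8}. C (\<sigma> i))" using reidx[OF s(1), of "{5..8}"] s(3) by simp
      also have "\<dots> = C (\<sigma> 5) + C (\<sigma> 6) + C (\<sigma> 7) + C (\<sigma> 8)" unfolding e58 by (simp add: algebra_simps)
      finally show ?thesis .
    qed
    have v1: "(1/2) *\<^sub>R (L - (C (\<sigma> 1) + C (\<sigma> 2) + C (\<sigma> 3) + C (\<sigma> 4))) = (1/2) *\<^sub>R (L - sum C Od)"
      by (simp add: sT)
    have v2: "(1/2) *\<^sub>R (L - C (\<sigma> 5) - C (\<sigma> 6) - C (\<sigma> 7) - C (\<sigma> 8)) = (1/2) *\<^sub>R (L - sum C ({1..8} - Od))"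
      unfolding sTc by (simp add: algebra_simps)
    show "\<exists>\<sigma>. bij_betw \<sigma> {1..8::nat} {1..8} \<and>
              NS = {of_int k *\<^sub>R L + n
                      + of_int m *\<^sub>R ((1/2) *\<^sub>R (L - (C (\<sigma> 1) + C (\<sigma> 2) + C (\<sigma> 3) + C (\<sigma> 4))))
                    | k m n. n \<in> prim_closure NS (C ` {1..8})} \<and>
              (1/2) *\<^sub>R (L - C (\<sigma> 5) - C (\<sigma> 6) - C (\<sigma> 7) - C (\<sigma> 8)) \<in> NS"
    proof (intro exI[of _ \<sigma>] conjI)
      show "bij_betw \<sigma> {1..8::nat} {1..8}" by (rule s(1))
      show "NS = {of_int k *\<^sub>R L + n
                      + of_int m *\<^sub>R ((1/2) *\<^sub>R (L - (C (\<sigma> 1) + C (\<sigma> 2) + C (\<sigma> 3) + C (\<sigma> 4))))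
                    | k m n. n \<in> prim_closure NS (C ` {1..8})}"
        by (subst v1) (rule seteq[OF Odsub gA, unfolded N_def])
      show "(1/2) *\<^sub>R (L - C (\<sigma> 5) - C (\<sigma> 6) - C (\<sigma> 7) - C (\<sigma> 8)) \<in> NS"
        unfolding v2 by (rule gB)
    qed
  qed
qed

end
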